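(* Consider the $Q\times2$ coin problem below with $Q\ge12$, and let $C_1=40$, $C_2=64$. For any algorithm $\mathrm{Alg}$, if \[ N_1\le T_1:=\frac{Q}{4C_1\lambda^2}\quad\text{and}\quad N_2\le T_2:=\frac{Q(\delta+\epsilon)}{4C_2\epsilon^2}, \] then there exists a set $J\subseteq[Q]$ with $|J|\ge\frac{Q}{6}$ such that $\mathbb P_j[\hat\theta=j]\le\frac12$ for all $j\in J$.
   Context: Coin problem: constants $\delta,\lambda,\epsilon\in(0,\frac14]$ and $2Q$ coins arranged in a $Q\times2$ table (rows $1,\dots,Q$, columns $1,2$), one coin per cell. There is an unknown special row $\theta\in[Q]$. In column 1 all coins are fair except the coin in row $\theta$, whose probability of heads is $\frac12+\lambda$. In column 2 all coins have probability of heads $\delta$ except the coin in row $\theta$, with probability of heads $\delta+\epsilon$. An algorithm sequentially chooses coins to flip, each choice possibly depending on all previous outcomes, performs a (possibly random, data-dependent) total of $\tau=N_1+N_2\le H$ flips for a fixed budget $H>0$, where $N_1$ and $N_2$ are the numbers of flips of coins in column 1 and column 2 respectively, and then outputs a prediction $\hat\theta\in[Q]$. For $j\in[Q]$, $\mathbb P_j$ denotes the probability measure induced by the algorithm and the coins when $\theta=j$. *)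

theory Defs
  imports "HOL-Probability.Probability"
begin

text \<open>Coin problem model.  Rows are 1..Q, columns 1,2.  A history is the list of
  performed flips: ((row, column), outcome), outcome True = heads.\<close>

datatype action = Flip nat nat | Stop nat

type_synonym history = "((nat \<times> nat) \<times> bool) list"

type_synonym algorithm = "history \<Rightarrow> action pmf"

definition coin_prob :: "real \<Rightarrow> real \<Rightarrow> real \<Rightarrow> nat \<Rightarrow> nat \<Rightarrow> nat \<Rightarrow> real" where
  "coin_prob lam delta eps theta r c =
     (if c = 1 then (if r = theta then 1/2 + lam else 1/2)
      else (if r = theta then delta + eps else delta))"

fun run :: "real \<Rightarrow> real \<Rightarrow> real \<Rightarrow> nat \<Rightarrow> algorithm \<Rightarrow> nat \<Rightarrow> history
            \<Rightarrow> (history \<times> nat) pmf" where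
  "run lam delta eps theta alg 0 h =
     map_pmf (\<lambda>a. case a of Stop k \<Rightarrow> (h, k) | Flip r c \<Rightarrow> (h, 0)) (alg h)"
| "run lam delta eps theta alg (Suc n) h =
     alg h \<bind> (\<lambda>a. case a of
        Stop k \<Rightarrow> return_pmf (h, k)
      | Flip r c \<Rightarrow> bernoulli_pmf (coin_prob lam delta eps theta r c) \<bind>
                     (\<lambda>b. run lam delta eps theta alg n (h @ [((r, c), b)])))"

definition valid_alg :: "nat \<Rightarrow> nat \<Rightarrow> algorithm \<Rightarrow> bool" where
  "valid_alg Q H alg \<longleftrightarrow>
     (\<forall>h. \<forall>a \<in> set_pmf (alg h).
        (\<forall>r c. a = Flip r c \<longrightarrow> r \<in> {1..Q} \<and> c \<in> {1,2} \<and> length h < H) \<and>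
        (\<forall>k. a = Stop k \<longrightarrow> k \<in> {1..Q}))"

definition P :: "real \<Rightarrow> real \<Rightarrow> real \<Rightarrow> nat \<Rightarrow> algorithm \<Rightarrow> nat \<Rightarrow> (history \<times> nat) pmf" where
  "P lam delta eps H alg j = run lam delta eps j alg H []"

definition N1 :: "history \<Rightarrow> nat" where
  "N1 h = length (filter (\<lambda>x. snd (fst x) = 1) h)"

definition N2 :: "history \<Rightarrow> nat" where
  "N2 h = length (filter (\<lambda>x. snd (fst x) = 2) h)"

end

theory Submission
  imports Defs
begin

definition Dv :: "real \<Rightarrow> real \<Rightarrow> real" where
  "Dv a b = (if a = 0 then 0 else a * ln (a / b))"

definition klb :: "real \<Rightarrow> real \<Rightarrow> real" where
  "klb x y = Dv x y + Dv (1 - x) (1 - y)"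

definition Inv_kl :: "real \<Rightarrow> real \<Rightarrow> real \<Rightarrow> bool" where
  "Inv_kl x y e \<longleftrightarrow> 0 \<le> x \<and> x \<le> 1 \<and> 0 \<le> y \<and> y \<le> 1 \<and> (0 < x \<longrightarrow> 0 < y)
     \<and> (x < 1 \<longrightarrow> y < 1) \<and> klb x y \<le> e"

lemma Dv_ge:
  assumes "0 \<le> a" "0 \<le> b" "0 < a \<longrightarrow> 0 < b" "0 < c"
  shows "a * ln c + a - b * c \<le> Dv a b"
proof (cases "a = 0")
  case True then show ?thesis using assms by (simp add: Dv_def)
next
  case False
  then have a: "a > 0" using assms by simp
  then have b: "b > 0" using assms by simp
  have "ln (b * c / a) \<le> b * c / a - 1" using a b assms(4) by (intro ln_le_minus_one) simp
  moreover have "ln (b * c / a) = ln b + ln c - ln a"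
    using a b assms(4) by (simp add: ln_div ln_mult)
  moreover have "Dv a b = a * (ln a - ln b)" using a b False by (simp add: Dv_def ln_div)
  ultimately have "a * (ln b + ln c - ln a) \<le> a * (b * c / a - 1)"
    using a by (intro mult_left_mono) auto
  then show ?thesis using a \<open>Dv a b = _\<close> by (simp add: algebra_simps)
qed

lemma Dv_sum:
  assumes "finite I" "\<And>i. i \<in> I \<Longrightarrow> 0 \<le> a i" "\<And>i. i \<in> I \<Longrightarrow> 0 \<le> b i"
    "\<And>i. i \<in> I \<Longrightarrow> 0 < a i \<Longrightarrow> 0 < b i"
  shows "Dv (\<Sum>i\<in>I. a i) (\<Sum>i\<in>I. b i) \<le> (\<Sum>i\<in>I. Dv (a i) (b i))"
proof (cases "(\<Sum>i\<in>I. a i) = 0")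
  case True
  then have "\<forall>i\<in>I. a i = 0" using assms by (simp add: sum_nonneg_eq_0_iff)
  then show ?thesis using True by (simp add: Dv_def)
next
  case False
  define A where "A = (\<Sum>i\<in>I. a i)"
  define B where "B = (\<Sum>i\<in>I. b i)"
  have A0: "A > 0" using False assms unfolding A_def by (simp add: sum_nonneg order_less_le)
  then obtain i where i: "i \<in> I" "a i > 0" unfolding A_def
    by (metis assms(2) order_less_le sum_nonneg_eq_0_iff assms(1) False)
  have "b i \<le> B" unfolding B_def using assms i by (intro member_le_sum) auto
  then have B0: "B > 0" using assms i by force
  define c where "c = A / B"
  have c0: "c > 0" using A0 B0 by (simp add: c_def)
  have "(\<Sum>i\<in>I. a i * ln c + a i - b i * c) \<le> (\<Sum>i\<in>I. Dv (a i) (b i))"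
    using assms c0 by (intro sum_mono Dv_ge) auto
  moreover have "(\<Sum>i\<in>I. a i * ln c + a i - b i * c) = A * ln c + A - B * c"
    unfolding A_def B_def by (simp add: sum.distrib sum_subtractf sum_distrib_right)
  moreover have "B * c = A" using B0 by (simp add: c_def)
  moreover have "Dv A B = A * ln c" using A0 by (simp add: Dv_def c_def)
  ultimately show ?thesis unfolding A_def B_def by simp
qed

lemma Dv_two:
  assumes "0 \<le> a1" "0 \<le> b1" "0 < a1 \<longrightarrow> 0 < b1" "0 \<le> a2" "0 \<le> b2" "0 < a2 \<longrightarrow> 0 < b2"
  shows "Dv (a1 + a2) (b1 + b2) \<le> Dv a1 b1 + Dv a2 b2"
proof -
  have "Dv (\<Sum>i\<in>{True,False}. (if i then a1 else a2)) (\<Sum>i\<in>{True,False}. (if i then b1 else b2))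
     \<le> (\<Sum>i\<in>{True,False}. Dv (if i then a1 else a2) (if i then b1 else b2))"
    using assms by (intro Dv_sum) auto
  then show ?thesis by simp
qed

lemma Dv_scale: "0 \<le> p \<Longrightarrow> Dv (p * a) (p * b) = p * Dv a b"
  by (cases "p = 0") (auto simp: Dv_def)

lemma Dv_same: "Dv a a = 0"
  by (simp add: Dv_def)

lemma Dv_split:
  assumes "0 < p" "0 < q" "0 \<le> a" "0 < a \<longrightarrow> 0 < b" "0 \<le> b"
  shows "Dv (p * a) (q * b) = a * Dv p q + p * Dv a b"
proof (cases "a = 0")
  case True then show ?thesis by (simp add: Dv_def)
next
  case False
  then have "a > 0" "b > 0" using assms by auto
  then have "ln ((p*a)/(q*b)) = ln (p/q) + ln (a/b)" using assms
    by (simp add: ln_div ln_mult)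
  then show ?thesis using assms \<open>a > 0\<close> \<open>b>0\<close> by (simp add: Dv_def algebra_simps)
qed

lemma Inv_mono: "Inv_kl x y e \<Longrightarrow> e \<le> e' \<Longrightarrow> Inv_kl x y e'"
  by (auto simp: Inv_kl_def)

lemma Inv_same: "0 \<le> x \<Longrightarrow> x \<le> 1 \<Longrightarrow> Inv_kl x x 0"
  by (auto simp: Inv_kl_def klb_def Dv_same)

lemma Inv_mix:
  assumes "finite S" "\<And>a. a \<in> S \<Longrightarrow> 0 \<le> \<pi> a" "(\<Sum>a\<in>S. \<pi> a) = 1"
    "\<And>a. a \<in> S \<Longrightarrow> Inv_kl (X a) (Y a) (E a)"
  shows "Inv_kl (\<Sum>a\<in>S. \<pi> a * X a) (\<Sum>a\<in>S. \<pi> a * Y a) (\<Sum>a\<in>S. \<pi> a * E a)"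
proof -
  have I: "0 \<le> X a" "X a \<le> 1" "0 \<le> Y a" "Y a \<le> 1" "0 < X a \<Longrightarrow> 0 < Y a"
    "X a < 1 \<Longrightarrow> Y a < 1" "klb (X a) (Y a) \<le> E a" if "a \<in> S" for a
    using assms(4)[OF that] by (auto simp: Inv_kl_def)
  have c1: "1 - (\<Sum>a\<in>S. \<pi> a * X a) = (\<Sum>a\<in>S. \<pi> a * (1 - X a))"
    using assms(3) by (simp add: algebra_simps sum_subtractf)
  have c2: "1 - (\<Sum>a\<in>S. \<pi> a * Y a) = (\<Sum>a\<in>S. \<pi> a * (1 - Y a))"
    using assms(3) by (simp add: algebra_simps sum_subtractf)
  have le1: "(\<Sum>a\<in>S. \<pi> a * Z a) \<le> 1" if "\<And>a. a \<in> S \<Longrightarrow> Z a \<le> 1" for Z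
  proof -
    have "(\<Sum>a\<in>S. \<pi> a * Z a) \<le> (\<Sum>a\<in>S. \<pi> a * 1)"
      using assms that by (intro sum_mono mult_left_mono) auto
    then show ?thesis using assms(3) by simp
  qed
  have pos: "0 < (\<Sum>a\<in>S. \<pi> a * W a)" if "0 < (\<Sum>a\<in>S. \<pi> a * Z a)"
     "\<And>a. a \<in> S \<Longrightarrow> 0 \<le> Z a" "\<And>a. a \<in> S \<Longrightarrow> 0 < Z a \<Longrightarrow> 0 < W a" "\<And>a. a \<in> S \<Longrightarrow> 0 \<le> W a" for Z W
  proof -
    have "\<exists>a\<in>S. \<pi> a * Z a > 0"
    proof (rule ccontr)
      assume "\<not> (\<exists>a\<in>S. \<pi> a * Z a > 0)"
      then have "\<forall>a\<in>S. \<pi> a * Z a \<le> 0" by (simp add: not_less)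
      then have "(\<Sum>a\<in>S. \<pi> a * Z a) \<le> 0" by (intro sum_nonpos) blast
      then show False using that(1) by simp
    qed
    then obtain a where a: "a \<in> S" "\<pi> a * Z a > 0" by blast
    then have "\<pi> a > 0 \<and> Z a > 0" using assms(2)[OF a(1)] that(2)[OF a(1)]
      by (simp add: zero_less_mult_iff)
    then have "\<pi> a > 0" "Z a > 0" by auto
    then have "\<pi> a * W a > 0" using that a by simp
    moreover have "\<pi> a * W a \<le> (\<Sum>a\<in>S. \<pi> a * W a)"
      using a assms that by (intro member_le_sum) auto
    ultimately show ?thesis by simp
  qed
  have m1: "0 \<le> \<pi> a * X a" if "a \<in> S" for a using assms(2)[OF that] I(1)[OF that] by simp
  have m2: "0 \<le> \<pi> a * Y a" if "a \<in> S" for a using assms(2)[OF that] I(3)[OF that] by simp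
  have m4: "0 \<le> \<pi> a * (1 - X a)" if "a \<in> S" for a using assms(2)[OF that] I(2)[OF that] by simp
  have m5: "0 \<le> \<pi> a * (1 - Y a)" if "a \<in> S" for a using assms(2)[OF that] I(4)[OF that] by simp
  have m3: "0 < \<pi> a * Y a" if "a \<in> S" "0 < \<pi> a * X a" for a
  proof -
    have "0 < \<pi> a" "0 < X a" using that(2) assms(2)[OF that(1)] I(1)[OF that(1)]
      by (auto simp: zero_less_mult_iff)
    then show ?thesis using I(5)[OF that(1)] by simp
  qed
  have m6: "0 < \<pi> a * (1 - Y a)" if "a \<in> S" "0 < \<pi> a * (1 - X a)" for a
  proof -
    have "0 < \<pi> a" "0 < 1 - X a" using that(2) assms(2)[OF that(1)] I(2)[OF that(1)]
      by (auto simp: zero_less_mult_iff)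
    then show ?thesis using I(6)[OF that(1)] by simp
  qed
  have k1: "Dv (\<Sum>a\<in>S. \<pi> a * X a) (\<Sum>a\<in>S. \<pi> a * Y a) \<le> (\<Sum>a\<in>S. \<pi> a * Dv (X a) (Y a))"
  proof -
    have "Dv (\<Sum>a\<in>S. \<pi> a * X a) (\<Sum>a\<in>S. \<pi> a * Y a) \<le> (\<Sum>a\<in>S. Dv (\<pi> a * X a) (\<pi> a * Y a))"
      by (rule Dv_sum[OF assms(1) m1 m2 m3])
    then show ?thesis using assms by (simp add: Dv_scale)
  qed
  have k2: "Dv (\<Sum>a\<in>S. \<pi> a * (1 - X a)) (\<Sum>a\<in>S. \<pi> a * (1 - Y a)) \<le> (\<Sum>a\<in>S. \<pi> a * Dv (1 - X a) (1 - Y a))"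
  proof -
    have "Dv (\<Sum>a\<in>S. \<pi> a * (1 - X a)) (\<Sum>a\<in>S. \<pi> a * (1 - Y a)) \<le> (\<Sum>a\<in>S. Dv (\<pi> a * (1 - X a)) (\<pi> a * (1 - Y a)))"
      by (rule Dv_sum[OF assms(1) m4 m5 m6])
    then show ?thesis using assms by (simp add: Dv_scale)
  qed
  have "klb (\<Sum>a\<in>S. \<pi> a * X a) (\<Sum>a\<in>S. \<pi> a * Y a) \<le> (\<Sum>a\<in>S. \<pi> a * klb (X a) (Y a))"
    using k1 k2 unfolding klb_def c1 c2 by (simp add: distrib_left sum.distrib)
  also have "\<dots> \<le> (\<Sum>a\<in>S. \<pi> a * E a)"
    using assms I by (intro sum_mono mult_left_mono) auto
  finally have kk: "klb (\<Sum>a\<in>S. \<pi> a * X a) (\<Sum>a\<in>S. \<pi> a * Y a) \<le> (\<Sum>a\<in>S. \<pi> a * E a)" .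
  have p1: "0 < (\<Sum>a\<in>S. \<pi> a * X a) \<longrightarrow> 0 < (\<Sum>a\<in>S. \<pi> a * Y a)"
  proof
    assume h: "0 < (\<Sum>a\<in>S. \<pi> a * X a)"
    show "0 < (\<Sum>a\<in>S. \<pi> a * Y a)" by (rule pos[OF h I(1) I(5) I(3)])
  qed
  have q1: "0 \<le> 1 - X a" "0 \<le> 1 - Y a" if "a \<in> S" for a using I(2,4)[OF that] by simp_all
  have q2: "0 < 1 - Y a" if "a \<in> S" "0 < 1 - X a" for a using I(6)[OF that(1)] that(2) by simp
  have p2: "(\<Sum>a\<in>S. \<pi> a * X a) < 1 \<longrightarrow> (\<Sum>a\<in>S. \<pi> a * Y a) < 1"
  proof
    assume h: "(\<Sum>a\<in>S. \<pi> a * X a) < 1"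
    then have h': "0 < (\<Sum>a\<in>S. \<pi> a * (1 - X a))" using c1 by linarith
    have "0 < (\<Sum>a\<in>S. \<pi> a * (1 - Y a))" by (rule pos[OF h' q1(1) q2 q1(2)])
    then show "(\<Sum>a\<in>S. \<pi> a * Y a) < 1" using c2 by linarith
  qed
  have n1: "0 \<le> (\<Sum>a\<in>S. \<pi> a * X a)"
    by (intro sum_nonneg mult_nonneg_nonneg assms(2) I(1))
  have n2: "0 \<le> (\<Sum>a\<in>S. \<pi> a * Y a)"
    by (intro sum_nonneg mult_nonneg_nonneg assms(2) I(3))
  have u1: "(\<Sum>a\<in>S. \<pi> a * X a) \<le> 1" by (rule le1) (rule I(2))
  have u2: "(\<Sum>a\<in>S. \<pi> a * Y a) \<le> 1" by (rule le1) (rule I(4))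
  show ?thesis unfolding Inv_kl_def by (intro conjI; rule n1 n2 u1 u2 p1 p2 kk)
qed

lemma pos_imp:
  assumes "0 < (p::real)" "0 < (q::real)" "0 < x \<longrightarrow> 0 < y" "0 \<le> x"
  shows "0 < p * x \<longrightarrow> 0 < q * y"
proof
  assume "0 < p * x"
  then have "0 < x" using assms(1) by (simp add: zero_less_mult_iff)
  then have "0 < y" using assms(3) by blast
  then show "0 < q * y" using assms(2) by simp
qed

lemma Inv_flip:
  assumes "Inv_kl x1 y1 e1" "Inv_kl x0 y0 e0" "0 < p" "p < 1" "0 < q" "q < 1"
  shows "Inv_kl (x1 * p + x0 * (1 - p)) (y1 * q + y0 * (1 - q)) (klb p q + p * e1 + (1 - p) * e0)"
proof -
  have I: "0 \<le> x1" "x1 \<le> 1" "0 \<le> y1" "y1 \<le> 1" "0 < x1 \<longrightarrow> 0 < y1"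
    "x1 < 1 \<longrightarrow> y1 < 1" "klb x1 y1 \<le> e1"
    "0 \<le> x0" "x0 \<le> 1" "0 \<le> y0" "y0 \<le> 1" "0 < x0 \<longrightarrow> 0 < y0"
    "x0 < 1 \<longrightarrow> y0 < 1" "klb x0 y0 \<le> e0"
    using assms(1,2) by (auto simp: Inv_kl_def)
  have pp: "0 < p" "0 < 1 - p" "0 < q" "0 < 1 - q" using assms by auto
  have x1': "0 \<le> 1 - x1" "0 \<le> 1 - y1" "0 < 1 - x1 \<longrightarrow> 0 < 1 - y1" using I by auto
  have x0': "0 \<le> 1 - x0" "0 \<le> 1 - y0" "0 < 1 - x0 \<longrightarrow> 0 < 1 - y0" using I by auto
  have a: "Dv (p * x1 + (1-p) * x0) (q * y1 + (1-q) * y0) \<le> Dv (p * x1) (q * y1) + Dv ((1-p) * x0) ((1-q) * y0)"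
    by (rule Dv_two[OF mult_nonneg_nonneg[OF less_imp_le[OF pp(1)] I(1)] mult_nonneg_nonneg[OF less_imp_le[OF pp(3)] I(3)]
      pos_imp[OF pp(1) pp(3) I(5) I(1)] mult_nonneg_nonneg[OF less_imp_le[OF pp(2)] I(8)]
      mult_nonneg_nonneg[OF less_imp_le[OF pp(4)] I(10)] pos_imp[OF pp(2) pp(4) I(12) I(8)]])
  have b: "Dv (p * (1-x1) + (1-p) * (1-x0)) (q * (1-y1) + (1-q) * (1-y0)) \<le> Dv (p * (1-x1)) (q * (1-y1)) + Dv ((1-p) * (1-x0)) ((1-q) * (1-y0))"
    by (rule Dv_two[OF mult_nonneg_nonneg[OF less_imp_le[OF pp(1)] x1'(1)] mult_nonneg_nonneg[OF less_imp_le[OF pp(3)] x1'(2)]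
      pos_imp[OF pp(1) pp(3) x1'(3) x1'(1)] mult_nonneg_nonneg[OF less_imp_le[OF pp(2)] x0'(1)]
      mult_nonneg_nonneg[OF less_imp_le[OF pp(4)] x0'(2)] pos_imp[OF pp(2) pp(4) x0'(3) x0'(1)]])
  have s1: "Dv (p * x1) (q * y1) = x1 * Dv p q + p * Dv x1 y1"
    using I assms by (intro Dv_split) auto
  have s2: "Dv ((1-p) * x0) ((1-q) * y0) = x0 * Dv (1-p) (1-q) + (1-p) * Dv x0 y0"
    using I assms by (intro Dv_split) auto
  have s3: "Dv (p * (1-x1)) (q * (1-y1)) = (1-x1) * Dv p q + p * Dv (1-x1) (1-y1)"
    using I assms by (intro Dv_split) auto
  have s4: "Dv ((1-p) * (1-x0)) ((1-q) * (1-y0)) = (1-x0) * Dv (1-p) (1-q) + (1-p) * Dv (1-x0) (1-y0)"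
    using I assms by (intro Dv_split) auto
  have e1: "1 - (x1 * p + x0 * (1 - p)) = p * (1-x1) + (1-p) * (1-x0)" by (simp add: algebra_simps)
  have e2: "1 - (y1 * q + y0 * (1 - q)) = q * (1-y1) + (1-q) * (1-y0)" by (simp add: algebra_simps)
  have eqX: "x1 * p + x0 * (1 - p) = p * x1 + (1-p) * x0" by (simp add: mult.commute)
  have eqY: "y1 * q + y0 * (1 - q) = q * y1 + (1-q) * y0" by (simp add: mult.commute)
  have "klb (x1 * p + x0 * (1 - p)) (y1 * q + y0 * (1 - q))
     = Dv (p * x1 + (1-p) * x0) (q * y1 + (1-q) * y0) + Dv (p * (1-x1) + (1-p) * (1-x0)) (q * (1-y1) + (1-q) * (1-y0))"
  proof -
    have e1': "1 - (p * x1 + (1-p) * x0) = p * (1-x1) + (1-p) * (1-x0)" by (simp add: algebra_simps)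
    have e2': "1 - (q * y1 + (1-q) * y0) = q * (1-y1) + (1-q) * (1-y0)" by (simp add: algebra_simps)
    show ?thesis unfolding klb_def eqX eqY e1' e2' by (rule refl)
  qed
  also have "\<dots> \<le> (Dv (p * x1) (q * y1) + Dv ((1-p) * x0) ((1-q) * y0))
      + (Dv (p * (1-x1)) (q * (1-y1)) + Dv ((1-p) * (1-x0)) ((1-q) * (1-y0)))"
    using a b by (rule add_mono)
  also have "\<dots> = (x1 * Dv p q + p * Dv x1 y1 + (x0 * Dv (1-p) (1-q) + (1-p) * Dv x0 y0))
      + ((1-x1) * Dv p q + p * Dv (1-x1) (1-y1) + ((1-x0) * Dv (1-p) (1-q) + (1-p) * Dv (1-x0) (1-y0)))"
    unfolding s1 s2 s3 s4 by (rule refl)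
  also have "\<dots> = klb p q + p * klb x1 y1 + (1-p) * klb x0 y0"
    unfolding klb_def by algebra
  also have "\<dots> \<le> klb p q + p * e1 + (1-p) * e0"
    using I assms by (intro add_mono mult_left_mono) auto
  finally have kk: "klb (x1 * p + x0 * (1 - p)) (y1 * q + y0 * (1 - q)) \<le> klb p q + p * e1 + (1 - p) * e0" .
  have r1: "0 \<le> x1 * p + x0 * (1 - p)" "x1 * p + x0 * (1 - p) \<le> 1"
  proof -
    show "0 \<le> x1 * p + x0 * (1 - p)" using I assms by simp
    have "x1 * p \<le> 1 * p" "x0 * (1 - p) \<le> 1 * (1 - p)"
      using I assms by (intro mult_right_mono; simp)+
    then show "x1 * p + x0 * (1 - p) \<le> 1" by simp
  qed
  have r2: "0 \<le> y1 * q + y0 * (1 - q)" "y1 * q + y0 * (1 - q) \<le> 1"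
  proof -
    show "0 \<le> y1 * q + y0 * (1 - q)" using I assms by simp
    have "y1 * q \<le> 1 * q" "y0 * (1 - q) \<le> 1 * (1 - q)"
      using I assms by (intro mult_right_mono; simp)+
    then show "y1 * q + y0 * (1 - q) \<le> 1" by simp
  qed
  have p1: "0 < y1 * q + y0 * (1 - q)" if "0 < x1 * p + x0 * (1 - p)"
  proof -
    have "0 < x1 \<or> 0 < x0"
    proof (rule ccontr)
      assume "\<not> (0 < x1 \<or> 0 < x0)"
      then have "x1 = 0" "x0 = 0" using I by auto
      then show False using that by simp
    qed
    then have "0 < y1 \<or> 0 < y0" using I by blast
    then have "0 < y1 * q \<or> 0 < y0 * (1-q)" using pp by auto
    moreover have "0 \<le> y1 * q" "0 \<le> y0 * (1-q)" using I assms by simp_all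
    ultimately show ?thesis by linarith
  qed
  have p2: "y1 * q + y0 * (1 - q) < 1" if "x1 * p + x0 * (1 - p) < 1"
  proof -
    have "0 < p * (1-x1) + (1-p) * (1-x0)" using that e1 by linarith
    then have "x1 < 1 \<or> x0 < 1"
    proof (rule contrapos_pp)
      assume "\<not> (x1 < 1 \<or> x0 < 1)"
      then have "x1 = 1" "x0 = 1" using I by auto
      then show "\<not> 0 < p * (1-x1) + (1-p) * (1-x0)" by simp
    qed
    then have "y1 < 1 \<or> y0 < 1" using I by blast
    then have "0 < q * (1-y1) \<or> 0 < (1-q) * (1-y0)" using pp by auto
    moreover have "0 \<le> q * (1-y1)" "0 \<le> (1-q) * (1-y0)" using I assms by simp_all
    ultimately show ?thesis using e2 by linarith
  qed
  have p1': "0 < x1 * p + x0 * (1 - p) \<longrightarrow> 0 < y1 * q + y0 * (1 - q)" using p1 by (rule impI)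
  have p2': "x1 * p + x0 * (1 - p) < 1 \<longrightarrow> y1 * q + y0 * (1 - q) < 1" using p2 by (rule impI)
  show ?thesis unfolding Inv_kl_def by (intro conjI; rule r1 r2 kk p1' p2')
qed

lemma fin_alg:
  assumes "valid_alg Q H alg"
  shows "finite (set_pmf (alg h))"
proof -
  have "set_pmf (alg h) \<subseteq> (\<lambda>(r,c). Flip r c) ` ({1..Q} \<times> {1,2}) \<union> Stop ` {1..Q}"
  proof
    fix a assume a: "a \<in> set_pmf (alg h)"
    show "a \<in> (\<lambda>(r,c). Flip r c) ` ({1..Q} \<times> {1,2}) \<union> Stop ` {1..Q}"
    proof (cases a)
      case (Flip r c)
      then have "r \<in> {1..Q}" "c \<in> {1,2}" using assms a unfolding valid_alg_def by blast+
      then show ?thesis using Flip by force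
    next
      case (Stop k)
      then have "k \<in> {1..Q}" using assms a unfolding valid_alg_def by blast
      then show ?thesis using Stop by force
    qed
  qed
  then show ?thesis by (rule finite_subset) auto
qed

lemma fin_bern: "finite (set_pmf (bernoulli_pmf p))"
  by (rule finite_subset[of _ UNIV]) auto

lemma fin_run:
  assumes "valid_alg Q H alg"
  shows "finite (set_pmf (run lam delta eps th alg n h))"
proof (induction n arbitrary: h)
  case 0
  then show ?case using fin_alg[OF assms] by simp
next
  case (Suc n)
  have "finite (set_pmf (case a of Stop k \<Rightarrow> return_pmf (h, k)
      | Flip r c \<Rightarrow> bernoulli_pmf (coin_prob lam delta eps th r c) \<bind>
                     (\<lambda>b. run lam delta eps th alg n (h @ [((r, c), b)]))))" for a
    using Suc fin_bern by (cases a) auto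
  then show ?case using fin_alg[OF assms] by simp
qed

lemma int_bind_fin:
  fixes g :: "'b \<Rightarrow> real"
  assumes "finite (set_pmf M)" "\<And>a. a \<in> set_pmf M \<Longrightarrow> finite (set_pmf (f a))"
    "\<And>x. 0 \<le> g x"
  shows "(\<integral>x. g x \<partial>measure_pmf (bind_pmf M f)) = (\<integral>a. (\<integral>x. g x \<partial>measure_pmf (f a)) \<partial>measure_pmf M)"
proof -
  have fb: "finite (set_pmf (bind_pmf M f))" using assms by simp
  have "ennreal (\<integral>x. g x \<partial>measure_pmf (bind_pmf M f)) = (\<integral>\<^sup>+x. ennreal (g x) \<partial>measure_pmf (bind_pmf M f))"
    using fb assms by (intro nn_integral_eq_integral[symmetric] integrable_measure_pmf_finite) auto
  also have "\<dots> = (\<integral>\<^sup>+a. (\<integral>\<^sup>+x. ennreal (g x) \<partial>measure_pmf (f a)) \<partial>measure_pmf M)"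
    by simp
  also have "\<dots> = (\<integral>\<^sup>+a. ennreal (\<integral>x. g x \<partial>measure_pmf (f a)) \<partial>measure_pmf M)"
  proof (intro nn_integral_cong_AE)
    show "AE a in measure_pmf M. (\<integral>\<^sup>+x. ennreal (g x) \<partial>measure_pmf (f a)) = ennreal (\<integral>x. g x \<partial>measure_pmf (f a))"
      using assms by (auto simp: AE_measure_pmf_iff intro!: nn_integral_eq_integral integrable_measure_pmf_finite)
  qed
  also have "\<dots> = ennreal (\<integral>a. (\<integral>x. g x \<partial>measure_pmf (f a)) \<partial>measure_pmf M)"
    using assms by (intro nn_integral_eq_integral integrable_measure_pmf_finite) (auto intro!: integral_nonneg_AE)
  finally show ?thesis
    using assms by (subst (asm) ennreal_inj) (auto intro!: integral_nonneg_AE)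
qed

lemma int_sum:
  fixes g :: "'b \<Rightarrow> real"
  assumes "finite (set_pmf M)"
  shows "(\<integral>x. g x \<partial>measure_pmf M) = (\<Sum>x\<in>set_pmf M. g x * pmf M x)"
  using assms by (intro integral_measure_pmf_real) auto

definition Fst :: "real \<Rightarrow> real \<Rightarrow> real \<Rightarrow> nat \<Rightarrow> algorithm \<Rightarrow> (history \<times> nat \<Rightarrow> real) \<Rightarrow> nat \<Rightarrow> history \<Rightarrow> action \<Rightarrow> real" where
  "Fst lam delta eps th alg g n h a = (case a of Stop k \<Rightarrow> g (h, k)
     | Flip r c \<Rightarrow> (\<integral>x. g x \<partial>measure_pmf (run lam delta eps th alg n (h @ [((r, c), True)]))) * coin_prob lam delta eps th r c
        + (\<integral>x. g x \<partial>measure_pmf (run lam delta eps th alg n (h @ [((r, c), False)]))) * (1 - coin_prob lam delta eps th r c))"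

lemma Ex_Suc:
  fixes g :: "history \<times> nat \<Rightarrow> real"
  assumes "valid_alg Q H alg" "\<And>x. 0 \<le> g x"
    "\<And>r c. 0 \<le> coin_prob lam delta eps th r c \<and> coin_prob lam delta eps th r c \<le> 1"
  shows "(\<integral>x. g x \<partial>measure_pmf (run lam delta eps th alg (Suc n) h))
       = (\<Sum>a\<in>set_pmf (alg h). pmf (alg h) a * Fst lam delta eps th alg g n h a)"
proof -
  have fa: "finite (set_pmf (case a of Stop k \<Rightarrow> return_pmf (h, k)
      | Flip r c \<Rightarrow> bernoulli_pmf (coin_prob lam delta eps th r c) \<bind>
                     (\<lambda>b. run lam delta eps th alg n (h @ [((r, c), b)]))))" for a
    using fin_run[OF assms(1)] fin_bern by (cases a) auto
  have "(\<integral>x. g x \<partial>measure_pmf (run lam delta eps th alg (Suc n) h))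
     = (\<integral>a. (\<integral>x. g x \<partial>measure_pmf (case a of Stop k \<Rightarrow> return_pmf (h, k)
      | Flip r c \<Rightarrow> bernoulli_pmf (coin_prob lam delta eps th r c) \<bind>
                     (\<lambda>b. run lam delta eps th alg n (h @ [((r, c), b)])))) \<partial>measure_pmf (alg h))"
    unfolding run.simps using fin_alg[OF assms(1)] fa assms(2) by (intro int_bind_fin) auto
  also have "\<dots> = (\<integral>a. Fst lam delta eps th alg g n h a \<partial>measure_pmf (alg h))"
  proof (intro Bochner_Integration.integral_cong refl)
    fix a
    show "(\<integral>x. g x \<partial>measure_pmf (case a of Stop k \<Rightarrow> return_pmf (h, k)
      | Flip r c \<Rightarrow> bernoulli_pmf (coin_prob lam delta eps th r c) \<bind>
                     (\<lambda>b. run lam delta eps th alg n (h @ [((r, c), b)])))) = Fst lam delta eps th alg g n h a"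
    proof (cases a)
      case (Flip r c)
      have "(\<integral>x. g x \<partial>measure_pmf (bernoulli_pmf (coin_prob lam delta eps th r c) \<bind>
                     (\<lambda>b. run lam delta eps th alg n (h @ [((r, c), b)]))))
         = (\<integral>b. (\<integral>x. g x \<partial>measure_pmf (run lam delta eps th alg n (h @ [((r, c), b)]))) \<partial>measure_pmf (bernoulli_pmf (coin_prob lam delta eps th r c)))"
        using fin_bern fin_run[OF assms(1)] assms(2) by (intro int_bind_fin) auto
      also have "\<dots> = Fst lam delta eps th alg g n h a"
        using assms(3)[of r c] Flip by (simp add: Fst_def)
      finally show ?thesis using Flip by simp
    qed (simp add: Fst_def)
  qed
  also have "\<dots> = (\<Sum>a\<in>set_pmf (alg h). pmf (alg h) a * Fst lam delta eps th alg g n h a)"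
    using fin_alg[OF assms(1)] by (subst int_sum) (auto simp: mult.commute)
  finally show ?thesis .
qed

lemma Ex_01:
  fixes g :: "'b \<Rightarrow> real"
  assumes "finite (set_pmf M)" "\<And>x. 0 \<le> g x" "\<And>x. g x \<le> 1"
  shows "0 \<le> (\<integral>x. g x \<partial>measure_pmf M)" "(\<integral>x. g x \<partial>measure_pmf M) \<le> 1"
proof -
  show "0 \<le> (\<integral>x. g x \<partial>measure_pmf M)" using assms by (auto intro: integral_nonneg_AE)
  have "(\<integral>x. g x \<partial>measure_pmf M) = (\<Sum>x\<in>set_pmf M. g x * pmf M x)" using assms(1) by (rule int_sum)
  also have "\<dots> \<le> (\<Sum>x\<in>set_pmf M. 1 * pmf M x)"
    using assms by (intro sum_mono mult_right_mono) auto
  also have "\<dots> = 1" using assms by (simp add: sum_pmf_eq_1)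
  finally show "(\<integral>x. g x \<partial>measure_pmf M) \<le> 1" .
qed

definition params :: "real \<Rightarrow> real \<Rightarrow> real \<Rightarrow> bool" where
  "params lam delta eps \<longleftrightarrow> 0 < delta \<and> delta \<le> 1/4 \<and> 0 < lam \<and> lam \<le> 1/4 \<and> 0 < eps \<and> eps \<le> 1/4"

definition cnt :: "nat \<Rightarrow> nat \<Rightarrow> history \<Rightarrow> nat" where
  "cnt j c h = length (filter (\<lambda>e. fst e = (j, c)) h)"

definition wj :: "real \<Rightarrow> real \<Rightarrow> real \<Rightarrow> nat \<Rightarrow> history \<Rightarrow> real" where
  "wj lam delta eps j h = klb (1/2) (1/2 + lam) * real (cnt j 1 h) + klb delta (delta + eps) * real (cnt j 2 h)"

definition ind :: "nat \<Rightarrow> history \<times> nat \<Rightarrow> real" where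
  "ind j x = (if snd x = j then 1 else 0)"

lemma cp_bounds:
  assumes "params lam delta eps"
  shows "0 < coin_prob lam delta eps th r c \<and> coin_prob lam delta eps th r c < 1"
  using assms unfolding params_def coin_prob_def by auto

lemma klb_nonneg:
  assumes "0 < p" "p < 1" "0 < q" "q < 1"
  shows "0 \<le> klb p q"
proof -
  have "Dv (p + (1 - p)) (q + (1 - q)) \<le> Dv p q + Dv (1 - p) (1 - q)"
    using assms by (intro Dv_two) auto
  then show ?thesis by (simp add: klb_def Dv_def)
qed

lemma k_nonneg:
  assumes "params lam delta eps"
  shows "0 \<le> klb (1/2) (1/2 + lam)" "0 \<le> klb delta (delta + eps)"
  using assms unfolding params_def by (auto intro!: klb_nonneg)

lemma wj_nonneg:
  assumes "params lam delta eps"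
  shows "0 \<le> wj lam delta eps j h"
  using k_nonneg[OF assms] unfolding wj_def by simp

lemma cnt_snoc: "cnt j c (h @ [x]) = cnt j c h + (if fst x = (j, c) then 1 else 0)"
  by (simp add: cnt_def)

lemma w_step:
  assumes "params lam delta eps" "1 \<le> j" "1 \<le> r" "c \<in> {1, 2}"
  shows "wj lam delta eps j (h @ [((r, c), b)]) = wj lam delta eps j h
     + klb (coin_prob lam delta eps 0 r c) (coin_prob lam delta eps j r c)"
proof (cases "r = j")
  case True
  then show ?thesis using assms
    by (auto simp: wj_def cnt_snoc coin_prob_def algebra_simps)
next
  case False
  then show ?thesis using assms
    by (auto simp: wj_def cnt_snoc coin_prob_def klb_def Dv_same)
qed

lemma supp_eq:
  assumes "params lam delta eps"
  shows "set_pmf (run lam delta eps th alg n h) = set_pmf (run lam delta eps th' alg n h)"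
proof (induction n arbitrary: h)
  case 0
  then show ?case by simp
next
  case (Suc n)
  have "set_pmf (case a of Stop k \<Rightarrow> return_pmf (h, k)
      | Flip r c \<Rightarrow> bernoulli_pmf (coin_prob lam delta eps th r c) \<bind>
                     (\<lambda>b. run lam delta eps th alg n (h @ [((r, c), b)])))
     = set_pmf (case a of Stop k \<Rightarrow> return_pmf (h, k)
      | Flip r c \<Rightarrow> bernoulli_pmf (coin_prob lam delta eps th' r c) \<bind>
                     (\<lambda>b. run lam delta eps th' alg n (h @ [((r, c), b)])))" for a
  proof (cases a)
    case (Flip r c)
    have "0 < coin_prob lam delta eps th r c \<and> coin_prob lam delta eps th r c < 1"
         "0 < coin_prob lam delta eps th' r c \<and> coin_prob lam delta eps th' r c < 1"
      using cp_bounds[OF assms] by blast+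
    then show ?thesis using Flip Suc by (simp add: set_pmf_bernoulli)
  qed simp
  then show ?case by simp
qed

lemma main_inv:
  assumes valid: "valid_alg Q H alg" and par: "params lam delta eps" and j: "1 \<le> j"
  shows "Inv_kl (\<integral>x. ind j x \<partial>measure_pmf (run lam delta eps 0 alg n h))
                (\<integral>x. ind j x \<partial>measure_pmf (run lam delta eps j alg n h))
                ((\<integral>x. wj lam delta eps j (fst x) \<partial>measure_pmf (run lam delta eps 0 alg n h)) - wj lam delta eps j h)"
proof (induction n arbitrary: h)
  case 0
  have fh: "fst (case a of Stop k \<Rightarrow> (h, k) | Flip r c \<Rightarrow> (h, 0)) = h" for a
    by (cases a) auto
  have w: "(\<integral>x. wj lam delta eps j (fst x) \<partial>measure_pmf (run lam delta eps 0 alg 0 h)) = wj lam delta eps j h"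
    by (simp add: fh)
  have e: "run lam delta eps j alg 0 h = run lam delta eps 0 alg 0 h" by simp
  have b: "0 \<le> (\<integral>x. ind j x \<partial>measure_pmf (run lam delta eps 0 alg 0 h))"
          "(\<integral>x. ind j x \<partial>measure_pmf (run lam delta eps 0 alg 0 h)) \<le> 1"
  proof -
    have fr: "finite (set_pmf (run lam delta eps 0 alg 0 h))" by (rule fin_run[OF valid])
    show "0 \<le> (\<integral>x. ind j x \<partial>measure_pmf (run lam delta eps 0 alg 0 h))"
          "(\<integral>x. ind j x \<partial>measure_pmf (run lam delta eps 0 alg 0 h)) \<le> 1"
      using Ex_01[OF fr, of "ind j"] by (auto simp: ind_def)
  qed
  show ?case unfolding e w using Inv_same[OF b] by simp
next
  case (Suc n)
  let ?S = "set_pmf (alg h)"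
  let ?pi = "pmf (alg h)"
  let ?W = "\<lambda>x. wj lam delta eps j (fst x)"
  have cp0: "\<And>r c. 0 \<le> coin_prob lam delta eps 0 r c \<and> coin_prob lam delta eps 0 r c \<le> 1"
    and cpj: "\<And>r c. 0 \<le> coin_prob lam delta eps j r c \<and> coin_prob lam delta eps j r c \<le> 1"
    using cp_bounds[OF par] by (meson less_imp_le)+
  have indnn: "\<And>x. 0 \<le> ind j x" by (simp add: ind_def)
  have Wnn: "\<And>x. 0 \<le> ?W x" using wj_nonneg[OF par] by simp
  have X: "(\<integral>x. ind j x \<partial>measure_pmf (run lam delta eps 0 alg (Suc n) h))
      = (\<Sum>a\<in>?S. ?pi a * Fst lam delta eps 0 alg (ind j) n h a)"
    by (rule Ex_Suc[OF valid indnn cp0])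
  have Y: "(\<integral>x. ind j x \<partial>measure_pmf (run lam delta eps j alg (Suc n) h))
      = (\<Sum>a\<in>?S. ?pi a * Fst lam delta eps j alg (ind j) n h a)"
    by (rule Ex_Suc[OF valid indnn cpj])
  have W: "(\<integral>x. ?W x \<partial>measure_pmf (run lam delta eps 0 alg (Suc n) h))
      = (\<Sum>a\<in>?S. ?pi a * Fst lam delta eps 0 alg ?W n h a)"
    by (rule Ex_Suc[OF valid Wnn cp0])
  have fS: "finite ?S" by (rule fin_alg[OF valid])
  have s1: "(\<Sum>a\<in>?S. ?pi a) = 1" using fS by (simp add: sum_pmf_eq_1)
  have E: "(\<Sum>a\<in>?S. ?pi a * Fst lam delta eps 0 alg ?W n h a) - wj lam delta eps j h
      = (\<Sum>a\<in>?S. ?pi a * (Fst lam delta eps 0 alg ?W n h a - wj lam delta eps j h))"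
    using s1 by (simp add: right_diff_distrib sum_subtractf flip: sum_distrib_right)
  have step: "Inv_kl (Fst lam delta eps 0 alg (ind j) n h a) (Fst lam delta eps j alg (ind j) n h a)
      (Fst lam delta eps 0 alg ?W n h a - wj lam delta eps j h)" if a: "a \<in> ?S" for a
  proof (cases a)
    case (Stop k)
    have "0 \<le> ind j (h, k)" "ind j (h, k) \<le> 1" by (auto simp: ind_def)
    then show ?thesis using Stop Inv_same by (simp add: Fst_def)
  next
    case (Flip r c)
    have rc: "r \<in> {1..Q}" "c \<in> {1,2}" using valid a Flip unfolding valid_alg_def by blast+
    define p where "p = coin_prob lam delta eps 0 r c"
    define q where "q = coin_prob lam delta eps j r c"
    have pq: "0 < p" "p < 1" "0 < q" "q < 1" using cp_bounds[OF par] unfolding p_def q_def by auto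
    have ws: "wj lam delta eps j (h @ [((r, c), b)]) = wj lam delta eps j h + klb p q" for b
      unfolding p_def q_def using rc j par by (intro w_step) auto
    have inv: "Inv_kl (Fst lam delta eps 0 alg (ind j) n h a) (Fst lam delta eps j alg (ind j) n h a)
      (klb p q + p * ((\<integral>x. ?W x \<partial>measure_pmf (run lam delta eps 0 alg n (h @ [((r, c), True)]))) - wj lam delta eps j (h @ [((r, c), True)]))
        + (1 - p) * ((\<integral>x. ?W x \<partial>measure_pmf (run lam delta eps 0 alg n (h @ [((r, c), False)]))) - wj lam delta eps j (h @ [((r, c), False)])))"
      unfolding Flip Fst_def action.case p_def[symmetric] q_def[symmetric]
      by (rule Inv_flip[OF Suc.IH Suc.IH pq])
    show ?thesis
      by (rule Inv_mono[OF inv]) (simp add: ws Flip Fst_def p_def[symmetric] algebra_simps)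
  qed
  show ?case unfolding X Y W E
    using fS s1 step by (intro Inv_mix) auto
qed

lemma final_kl:
  assumes "Inv_kl x y e" "x \<le> 1/4" "e \<le> 47/480"
  shows "y \<le> 1/2"
proof (rule ccontr)
  assume "\<not> y \<le> 1/2"
  then have y: "y > 1/2" by simp
  have I: "0 \<le> x" "x \<le> 1" "0 \<le> y" "y \<le> 1" "0 < x \<longrightarrow> 0 < y" "x < 1 \<longrightarrow> y < 1" "klb x y \<le> e"
    using assms(1) by (auto simp: Inv_kl_def)
  have d1: "x * ln (1/2) + x - y * (1/2) \<le> Dv x y" using I by (intro Dv_ge) auto
  have d2: "(1-x) * ln (3/2) + (1-x) - (1-y) * (3/2) \<le> Dv (1-x) (1-y)" using I by (intro Dv_ge) auto
  have l1: "ln (1/2::real) = - ln 2" by (simp add: ln_div)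
  have l2: "ln (3/2::real) = ln 3 - ln 2" by (simp add: ln_div)
  have l3: "ln (3::real) > 0" by simp
  have l27: "ln (27::real) = 3 * ln 3"
  proof -
    have "ln ((3::real)^3) = 3 * ln 3" by (subst ln_realpow) auto
    then show ?thesis by simp
  qed
  have l16: "ln (16::real) = 4 * ln 2"
  proof -
    have "ln ((2::real)^4) = 4 * ln 2" by (subst ln_realpow) auto
    then show ?thesis by simp
  qed
  have "ln (16/27::real) \<le> 16/27 - 1" by (rule ln_le_minus_one) simp
  then have l4: "3 * ln 3 - 4 * ln 2 \<ge> (11/27::real)" using l27 l16 by (simp add: ln_div)
  have "(1 - x) * ln 3 \<ge> (3/4) * ln 3" using l3 assms(2) by (intro mult_right_mono) auto
  note m = this
  have A: "x * ln (1/2) + (1-x) * ln (3/2) = - ln 2 + (1-x) * ln 3"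
    by (simp add: l1 l2 algebra_simps)
  have B: "klb x y \<ge> x * ln (1/2) + x - y * (1/2) + ((1-x) * ln (3/2) + (1-x) - (1-y) * (3/2))"
    using d1 d2 unfolding klb_def by linarith
  have C: "x - y * (1/2) + ((1-x) - (1-y) * (3/2)) = y - 1/2" by argo
  have "klb x y \<ge> (x * ln (1/2) + (1-x) * ln (3/2)) + (y - 1/2)"
    using B C by linarith
  then have "klb x y \<ge> - ln 2 + (1-x) * ln 3 + (y - 1/2)" using A by linarith
  then have "klb x y \<ge> - ln 2 + (3/4) * ln 3 + (y - 1/2)" using m by linarith
  then show False using l4 y I assms(3) by linarith
qed

lemma k1_bound:
  assumes "0 < lam" "lam \<le> 1/4"
  shows "klb (1/2) (1/2 + lam) \<le> 8 * lam^2 / 3"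
proof -
  have a: "0 < 1/2 - lam" "0 < 1/2 + lam" using assms by auto
  define u where "u = (1/2) / (1/2 + lam) * ((1/2) / (1/2 - lam))"
  have u0: "u > 0" using a by (simp add: u_def)
  have "klb (1/2) (1/2 + lam) = (1/2) * ln ((1/2) / (1/2 + lam)) + (1/2) * ln ((1/2) / (1/2 - lam))"
    by (simp add: klb_def Dv_def)
  also have "\<dots> = (1/2) * (ln ((1/2) / (1/2 + lam)) + ln ((1/2) / (1/2 - lam)))"
    by (simp add: distrib_left)
  also have "\<dots> = (1/2) * ln u"
  proof -
    have "ln ((1/2) / (1/2 + lam)) + ln ((1/2) / (1/2 - lam)) = ln u"
      unfolding u_def by (rule ln_mult_pos[symmetric]) (use a in auto)
    then show ?thesis by simp
  qed
  also have "\<dots> \<le> (1/2) * (u - 1)" using u0 ln_le_minus_one[OF u0] by simp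
  also have "(1/2) * (u - 1) = (1/2) * (lam^2 / (1/4 - lam^2))"
  proof -
    have "(1/2 + lam) * (1/2 - lam) > 0" using a by simp
    then have u: "u = (1/4) / ((1/2 + lam) * (1/2 - lam))" unfolding u_def by (simp add: field_simps)
    have d: "(1/2 + lam) * (1/2 - lam) = 1/4 - lam^2" by (simp add: algebra_simps power2_eq_square)
    have d0: "1/4 - lam^2 > 0" using \<open>(1/2 + lam) * (1/2 - lam) > 0\<close> d by simp
    have "u - 1 = lam^2 / (1/4 - lam^2)" unfolding u d using d0 by (simp add: field_simps)
    then show ?thesis by simp
  qed
  also have "\<dots> \<le> (1/2) * (lam^2 / (3/16))"
  proof -
    have "lam^2 \<le> (1/4)^2" using assms by (intro power_mono) auto
    then have "3/16 \<le> 1/4 - lam^2" by (simp add: power2_eq_square)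
    then show ?thesis by (intro mult_left_mono divide_left_mono) auto
  qed
  finally show ?thesis by simp
qed

lemma Dv_chi: "0 \<le> a \<Longrightarrow> 0 < b \<Longrightarrow> Dv a b \<le> a * (a / b - 1)"
proof (cases "a = 0")
  case False
  assume "0 \<le> a" "0 < b"
  then have "a > 0" using False by simp
  then have "ln (a / b) \<le> a / b - 1" using \<open>0 < b\<close> by (intro ln_le_minus_one) simp
  then show ?thesis using \<open>a > 0\<close> False by (simp add: Dv_def)
qed (simp add: Dv_def)

lemma k2_bound:
  assumes "0 < delta" "delta \<le> 1/4" "0 < eps" "eps \<le> 1/4"
  shows "klb delta (delta + eps) \<le> 2 * eps^2 / (delta + eps)"
proof -
  define q where "q = delta + eps"
  have q: "0 < q" "q \<le> 1/2" using assms by (auto simp: q_def)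
  have "klb delta q \<le> delta * (delta / q - 1) + (1 - delta) * ((1 - delta) / (1 - q) - 1)"
    unfolding klb_def using assms q by (intro add_mono Dv_chi) auto
  also have "\<dots> = eps^2 / (q * (1 - q))"
    using q unfolding q_def by (simp add: field_simps power2_eq_square)
  also have "\<dots> \<le> eps^2 / (q * (1/2))"
    using q by (intro divide_left_mono mult_left_mono mult_pos_pos) auto
  also have "\<dots> = 2 * eps^2 / q" by simp
  finally show ?thesis by (simp add: q_def)
qed

lemma aux32: "B \<noteq> 0 \<Longrightarrow> A \<noteq> 0 \<Longrightarrow> (2*A/B) * (B/(64*A)) = (1/32::real)"
  by (simp add: field_simps)

lemma count_bad:
  fixes f :: "nat \<Rightarrow> real"
  assumes "finite S" "\<And>j. j \<in> S \<Longrightarrow> 0 \<le> f j" "(\<Sum>j\<in>S. f j) \<le> T" "0 < t"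
  shows "real (card {j \<in> S. f j > t}) * t \<le> T"
proof -
  have "real (card {j \<in> S. f j > t}) * t = (\<Sum>j\<in>{j \<in> S. f j > t}. t)" by simp
  also have "\<dots> \<le> (\<Sum>j\<in>{j \<in> S. f j > t}. f j)" by (intro sum_mono) auto
  also have "\<dots> \<le> (\<Sum>j\<in>S. f j)" using assms by (intro sum_mono2) auto
  finally show ?thesis using assms by simp
qed

lemma cnt_sum:
  assumes "finite S"
  shows "(\<Sum>j\<in>S. cnt j c h) \<le> length (filter (\<lambda>x. snd (fst x) = c) h)"
proof (induction h)
  case Nil
  then show ?case by (simp add: cnt_def)
next
  case (Cons x h)
  obtain r c' b where x: "x = ((r, c'), b)" by (metis prod.collapse)
  have cc: "cnt j c (x # h) = (if (r, c') = (j, c) then 1 else 0) + cnt j c h" for j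
    by (simp add: cnt_def x)
  have "(\<Sum>j\<in>S. cnt j c (x # h)) = (\<Sum>j\<in>S. (if (r, c') = (j, c) then 1 else 0)) + (\<Sum>j\<in>S. cnt j c h)"
    unfolding cc by (rule sum.distrib)
  moreover have "(\<Sum>j\<in>S. (if (r, c') = (j, c) then 1 else 0)) \<le> (if c' = c then 1 else (0::nat))"
  proof (cases "c' = c")
    case True
    have "(\<Sum>j\<in>S. (if (r, c') = (j, c) then 1 else (0::nat))) \<le> (\<Sum>j\<in>S. (if j = r then 1 else 0))"
      by (intro sum_mono) auto
    also have "\<dots> = (if r \<in> S then 1 else 0)" using assms by (rule sum.delta)
    finally show ?thesis using True by (simp split: if_splits)
  next
    case False
    then show ?thesis by simp
  qed
  moreover have "length (filter (\<lambda>x. snd (fst x) = c) (x # h)) = (if c' = c then 1 else 0) + length (filter (\<lambda>x. snd (fst x) = c) h)"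
    by (simp add: x)
  ultimately show ?case using Cons.IH by linarith
qed

theorem lemma7:
  fixes Q H :: nat and delta lam eps :: real and alg :: algorithm
  assumes "Q \<ge> 12" and "H > 0"
    and "0 < delta" "delta \<le> 1/4" and "0 < lam" "lam \<le> 1/4" and "0 < eps" "eps \<le> 1/4"
    and "valid_alg Q H alg"
    and "\<forall>j \<in> {1..Q}. \<forall>(h, k) \<in> set_pmf (P lam delta eps H alg j).
           real (N1 h) \<le> real Q / (4 * 40 * lam\<^sup>2) \<and>
           real (N2 h) \<le> real Q * (delta + eps) / (4 * 64 * eps\<^sup>2)"
  shows "\<exists>J \<subseteq> {1..Q}. real (card J) \<ge> real Q / 6 \<and>
           (\<forall>j \<in> J. measure_pmf.prob (P lam delta eps H alg j) {(h, k). k = j} \<le> 1/2)"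
proof -
  have par: "params lam delta eps" using assms unfolding params_def by auto
  have valid: "valid_alg Q H alg" by fact
  define R0 where "R0 = run lam delta eps 0 alg H []"
  define Om where "Om = set_pmf R0"
  have fOm: "finite Om" using fin_run[OF valid] by (simp add: Om_def R0_def)
  have intsum: "(\<integral>z. g z \<partial>measure_pmf R0) = (\<Sum>z\<in>Om. g z * pmf R0 z)" for g :: "history \<times> nat \<Rightarrow> real"
    unfolding Om_def by (rule int_sum) (use fOm Om_def in simp)
  have s1: "(\<Sum>z\<in>Om. pmf R0 z) = 1" using fOm by (simp add: Om_def sum_pmf_eq_1)
  have pnn: "0 \<le> pmf R0 z" for z by simp
  define T1 where "T1 = real Q / (4 * 40 * lam\<^sup>2)"
  define T2 where "T2 = real Q * (delta + eps) / (4 * 64 * eps\<^sup>2)"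
  have Q1: "(1::nat) \<in> {1..Q}" using assms(1) by simp
  have supp: "Om = set_pmf (P lam delta eps H alg 1)"
    unfolding Om_def R0_def P_def by (rule supp_eq[OF par])
  have bnd: "real (N1 (fst z)) \<le> T1 \<and> real (N2 (fst z)) \<le> T2" if "z \<in> Om" for z
    using assms(10) Q1 that unfolding supp T1_def T2_def by (cases z) fastforce
  define x where "x j = (\<integral>z. ind j z \<partial>measure_pmf R0)" for j
  define b where "b j = (\<integral>z. real (cnt j 1 (fst z)) \<partial>measure_pmf R0)" for j
  define c where "c j = (\<integral>z. real (cnt j 2 (fst z)) \<partial>measure_pmf R0)" for j
  define k1 where "k1 = klb (1/2) (1/2 + lam)"
  define k2 where "k2 = klb delta (delta + eps)"
  have xnn: "0 \<le> x j" for j unfolding x_def intsum by (intro sum_nonneg) (simp add: ind_def)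
  have bnn: "0 \<le> b j" for j unfolding b_def intsum by (intro sum_nonneg) simp
  have cnn: "0 \<le> c j" for j unfolding c_def intsum by (intro sum_nonneg) simp
  have sx: "(\<Sum>j\<in>{1..Q}. x j) \<le> 1"
  proof -
    have "(\<Sum>j\<in>{1..Q}. x j) = (\<Sum>z\<in>Om. (\<Sum>j\<in>{1..Q}. ind j z) * pmf R0 z)"
      unfolding x_def intsum by (simp only: sum_distrib_right) (rule sum.swap)
    also have "\<dots> \<le> (\<Sum>z\<in>Om. 1 * pmf R0 z)"
    proof (intro sum_mono mult_right_mono pnn)
      fix z
      have "(\<Sum>j\<in>{1..Q}. ind j z) = (if snd z \<in> {1..Q} then 1 else 0)"
        unfolding ind_def by (rule sum.delta') simp
      then show "(\<Sum>j\<in>{1..Q}. ind j z) \<le> 1" by simp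
    qed
    finally show ?thesis using s1 by simp
  qed
  have sb: "(\<Sum>j\<in>{1..Q}. b j) \<le> T1"
  proof -
    have "(\<Sum>j\<in>{1..Q}. b j) = (\<Sum>z\<in>Om. real (\<Sum>j\<in>{1..Q}. cnt j 1 (fst z)) * pmf R0 z)"
      unfolding b_def intsum by (simp only: of_nat_sum sum_distrib_right) (rule sum.swap)
    also have "\<dots> \<le> (\<Sum>z\<in>Om. T1 * pmf R0 z)"
    proof (intro sum_mono mult_right_mono pnn)
      fix z assume "z \<in> Om"
      have "(\<Sum>j\<in>{1..Q}. cnt j 1 (fst z)) \<le> N1 (fst z)"
        unfolding N1_def by (rule cnt_sum) simp
      then show "real (\<Sum>j\<in>{1..Q}. cnt j 1 (fst z)) \<le> T1"
        using bnd[OF \<open>z \<in> Om\<close>] by linarith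
    qed
    finally show ?thesis using s1 by (simp add: sum_distrib_left[symmetric])
  qed
  have sc: "(\<Sum>j\<in>{1..Q}. c j) \<le> T2"
  proof -
    have "(\<Sum>j\<in>{1..Q}. c j) = (\<Sum>z\<in>Om. real (\<Sum>j\<in>{1..Q}. cnt j 2 (fst z)) * pmf R0 z)"
      unfolding c_def intsum by (simp only: of_nat_sum sum_distrib_right) (rule sum.swap)
    also have "\<dots> \<le> (\<Sum>z\<in>Om. T2 * pmf R0 z)"
    proof (intro sum_mono mult_right_mono pnn)
      fix z assume "z \<in> Om"
      have "(\<Sum>j\<in>{1..Q}. cnt j 2 (fst z)) \<le> N2 (fst z)"
        unfolding N2_def by (rule cnt_sum) simp
      then show "real (\<Sum>j\<in>{1..Q}. cnt j 2 (fst z)) \<le> T2"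
        using bnd[OF \<open>z \<in> Om\<close>] by linarith
    qed
    finally show ?thesis using s1 by (simp add: sum_distrib_left[symmetric])
  qed
  define ta where "ta = 3 / real Q"
  define tb where "tb = 1 / (40 * lam^2)"
  define tc where "tc = (delta + eps) / (64 * eps^2)"
  have Qpos: "real Q \<ge> 12" using assms(1) by simp
  have ta0: "ta > 0" "tb > 0" "tc > 0" using Qpos assms by (auto simp: ta_def tb_def tc_def)
  have T1e: "T1 = real Q * tb / 4" by (simp add: T1_def tb_def field_simps)
  have T2e: "T2 = real Q * tc / 4" by (simp add: T2_def tc_def field_simps)
  define Ba where "Ba = {j \<in> {1..Q}. x j > ta}"
  define Bb where "Bb = {j \<in> {1..Q}. b j > tb}"
  define Bc where "Bc = {j \<in> {1..Q}. c j > tc}"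
  have ca: "real (card Ba) * ta \<le> 1" unfolding Ba_def using xnn sx ta0 by (intro count_bad) auto
  have cb: "real (card Bb) * tb \<le> T1" unfolding Bb_def using bnn sb ta0 by (intro count_bad) auto
  have cc: "real (card Bc) * tc \<le> T2" unfolding Bc_def using cnn sc ta0 by (intro count_bad) auto
  have ca': "real (card Ba) \<le> real Q / 3"
    using ca Qpos unfolding ta_def by (simp add: field_simps)
  have cb': "real (card Bb) \<le> real Q / 4"
  proof -
    have "real (card Bb) * tb \<le> (real Q / 4) * tb" using cb T1e by simp
    then show ?thesis using ta0 by simp
  qed
  have cc': "real (card Bc) \<le> real Q / 4"
  proof -
    have "real (card Bc) * tc \<le> (real Q / 4) * tc" using cc T2e by simp
    then show ?thesis using ta0 by simp
  qed
  define J where "J = {1..Q} - (Ba \<union> Bb \<union> Bc)"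
  have "card {1..Q} \<le> card (J \<union> (Ba \<union> Bb \<union> Bc))"
    by (intro card_mono) (auto simp: J_def Ba_def Bb_def Bc_def)
  also have "\<dots> \<le> card J + card (Ba \<union> Bb \<union> Bc)" by (rule card_Un_le)
  also have "card (Ba \<union> Bb \<union> Bc) \<le> card Ba + card Bb + card Bc"
    by (meson add_le_mono card_Un_le le_trans order_refl)
  finally have "Q \<le> card J + (card Ba + card Bb + card Bc)" by simp
  then have "real Q \<le> real (card J) + real (card Ba) + real (card Bb) + real (card Bc)"
    by linarith
  then have cardJ: "real (card J) \<ge> real Q / 6" using ca' cb' cc' by linarith
  have k1b: "k1 \<le> 8 * lam^2 / 3" unfolding k1_def using assms by (intro k1_bound) auto
  have k2b: "k2 \<le> 2 * eps^2 / (delta + eps)" unfolding k2_def using assms by (intro k2_bound) auto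
  have k1n: "0 \<le> k1" "0 \<le> k2" using k_nonneg[OF par] by (simp_all add: k1_def k2_def)
  have good: "measure_pmf.prob (P lam delta eps H alg j) {(h, k). k = j} \<le> 1/2" if j: "j \<in> J" for j
  proof -
    have j1: "1 \<le> j" "j \<in> {1..Q}" using j by (auto simp: J_def)
    have xj: "x j \<le> ta" "b j \<le> tb" "c j \<le> tc" using j by (auto simp: J_def Ba_def Bb_def Bc_def)
    have inv: "Inv_kl (x j) (\<integral>z. ind j z \<partial>measure_pmf (run lam delta eps j alg H []))
        ((\<integral>z. wj lam delta eps j (fst z) \<partial>measure_pmf R0) - wj lam delta eps j [])"
      unfolding x_def R0_def by (rule main_inv[OF valid par j1(1)])
    have w0: "wj lam delta eps j [] = 0" by (simp add: wj_def cnt_def)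
    have we: "(\<integral>z. wj lam delta eps j (fst z) \<partial>measure_pmf R0) = k1 * b j + k2 * c j"
      unfolding b_def c_def intsum wj_def k1_def[symmetric] k2_def[symmetric]
      by (simp add: sum.distrib sum_distrib_left algebra_simps)
    have e1: "k1 * b j \<le> (8 * lam^2 / 3) * tb"
      using k1b k1n xj bnn by (intro mult_mono) auto
    have e2: "k2 * c j \<le> (2 * eps^2 / (delta + eps)) * tc"
      using k2b k1n xj cnn by (intro mult_mono) auto
    have e3: "(8 * lam^2 / 3) * tb = 1/15" using assms by (simp add: tb_def field_simps)
    have e4: "(2 * eps^2 / (delta + eps)) * tc = 1/32" unfolding tc_def
      using assms by (intro aux32) auto
    have ebound: "(\<integral>z. wj lam delta eps j (fst z) \<partial>measure_pmf R0) - wj lam delta eps j [] \<le> 47/480"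
      using we w0 e1 e2 e3 e4 by linarith
    have xq: "x j \<le> 1/4"
    proof -
      have "ta \<le> 1/4" using Qpos by (simp add: ta_def field_simps)
      then show ?thesis using xj by linarith
    qed
    have y: "(\<integral>z. ind j z \<partial>measure_pmf (run lam delta eps j alg H [])) \<le> 1/2"
      by (rule final_kl[OF inv xq ebound])
    have ie: "ind j = indicator {(h, k). k = j}"
      by (auto simp: ind_def indicator_def fun_eq_iff)
    have "measure_pmf.prob (P lam delta eps H alg j) {(h, k). k = j}
        = (\<integral>z. ind j z \<partial>measure_pmf (run lam delta eps j alg H []))"
      unfolding ie P_def by simp
    then show ?thesis using y by simp
  qed
  have Jsub: "J \<subseteq> {1..Q}" by (auto simp: J_def)
  show ?thesis using Jsub cardJ good by blast
qed

end
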